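(* Let $s=a_1^{m_1}\cdots a_r^{m_r}$ and $t=a_1^{m'_1}\cdots a_r^{m'_r}$ be run-length encodings of two non-empty strings with the same run symbols $a_1,\dots,a_r$ (and $m_i,m'_i\ge1$), and let $D=\{i: m_i\ne m'_i\}$. Write $\mathcal{F}(s)=[\tau_0,\dots,\tau_{k-1}]$ and $\mathcal{F}(t)=[\tau'_0,\dots,\tau'_{k-1}]$ (both have the same length $k$). Then the set of indices $d$ with $\tau_d\ne\tau'_d$ is exactly $\{\min(i,r+1-i): i\in D\}$. In particular, if $s$ and $t$ differ in a single run length $m_i$, then exactly one token differs, namely the one at index $\min(i,r+1-i)$.
   Context: Let $\Sigma$ be an alphabet and $\texttt{@},\texttt{\$}$ two distinct symbols not in $\Sigma$. The run-length encoding of a non-empty string is the unique decomposition $a_1^{m_1}\cdots a_r^{m_r}$ with $a_i\in\Sigma$, $m_i\ge1$, $a_i\ne a_{i+1}$ ($a^m$ is $a$ repeated $m$ times). For $s$ with $|s|=n$ let $\hat s=\texttt{@}\,s\,\texttt{\$}$ (positions $1,\dots,n+2$); $\hat s[i..j)$ is the substring at positions $i,\dots,j-1$. The leading (trailing) run of a non-empty string is its longest prefix (suffix) consisting of one repeated symbol. The Flashback decomposition $\mathcal{F}(s)$ is the sequence of tokens $(\sigma,p)$ (symbol string $\sigma$, integer split position $p\ge0$) produced as follows, starting from active span $[lo,hi)=[1,n+3)$: if $lo\ge hi$, stop. Let $\ell$ be the leading-run length of $\hat s[lo..hi)$. If $\ell=hi-lo$, append $(\hat s[lo..hi),0)$ and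 stop. Otherwise let $\hat s[r'..hi)$ be the trailing run of $\hat s[lo..hi)$ and $\sigma=\hat s[lo..lo+\ell)\cdot\hat s[r'..hi)$; if $lo+\ell\ge r'$, append $(\sigma,0)$ and stop; otherwise append $(\sigma,\ell)$ and repeat with $[lo+\ell,r')$. Tokens are indexed $\tau_0,\tau_1,\dots$ in order of emission. *)

theory Defs
  imports Main
begin

datatype 'a esym = At | Dollar | Sym 'a

definition hat :: "'a list \<Rightarrow> 'a esym list" where
  "hat s = [At] @ map Sym s @ [Dollar]"

definition lead_run_len :: "'b list \<Rightarrow> nat" where
  "lead_run_len w = length (takeWhile (\<lambda>x. x = hd w) w)"

definition trail_run_len :: "'b list \<Rightarrow> nat" where
  "trail_run_len w = length (takeWhile (\<lambda>x. x = last w) (rev w))"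

text \<open>Flashback decomposition applied to the active span w = hat s [lo..hi).
  With l the leading run length and r' = hi - (trailing run length):
  the new span [lo+l, r') is  drop l (take (length w - trail) w).\<close>
function flash :: "'b list \<Rightarrow> ('b list \<times> nat) list" where
  "flash w =
    (if w = [] then []
     else let l = lead_run_len w in
       if l = length w then [(w, 0)]
       else let r' = length w - trail_run_len w;
                \<sigma> = take l w @ drop r' w in
         if l \<ge> r' then [(\<sigma>, 0)]
         else (\<sigma>, l) # flash (drop l (take r' w)))"
  by pat_completeness auto
termination
  apply (relation "measure length")
   apply simp
  apply (auto simp: lead_run_len_def)
  subgoal for w by (cases w) auto
  done

definition flashback :: "'a list \<Rightarrow> ('a esym list \<times> nat) list" where
  "flashback s = flash (hat s)"

definition rle_string :: "'a list \<Rightarrow> nat list \<Rightarrow> 'a list" where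
  "rle_string as ms = concat (map2 (\<lambda>a m. replicate m a) as ms)"

definition valid_rle :: "'a list \<Rightarrow> nat list \<Rightarrow> bool" where
  "valid_rle as ms \<longleftrightarrow> length as = length ms \<and> as \<noteq> [] \<and>
     (\<forall>i < length ms. ms ! i \<ge> 1) \<and>
     (\<forall>i. Suc i < length as \<longrightarrow> as ! i \<noteq> as ! Suc i)"

end

theory Submission
  imports Defs
begin

definition rep :: "'b \<times> nat \<Rightarrow> 'b list" where "rep x = replicate (snd x) (fst x)"
definition cc :: "('b \<times> nat) list \<Rightarrow> 'b list" where "cc xs = concat (map rep xs)"
definition vr :: "('b \<times> nat) list \<Rightarrow> bool" where
  "vr xs \<longleftrightarrow> (\<forall>x\<in>set xs. 0 < snd x) \<and> successively (\<lambda>a b. fst a \<noteq> fst b) xs"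

lemma cc_simps[simp]: "cc [] = []" "cc (x # xs) = rep x @ cc xs" "cc (xs @ ys) = cc xs @ cc ys"
  by (auto simp: cc_def)

lemma length_rep[simp]: "length (rep x) = snd x" by (simp add: rep_def)

lemma vr_Cons: "vr (x # xs) \<longleftrightarrow> 0 < snd x \<and> vr xs \<and> (xs = [] \<or> fst x \<noteq> fst (hd xs))"
  by (auto simp: vr_def successively_Cons)

lemma vr_append: "vr (xs @ ys) \<Longrightarrow> vr xs \<and> vr ys"
  by (auto simp: vr_def successively_append_iff)

lemma vr_rev: "vr (rev xs) = vr xs"
  by (auto simp: vr_def intro: successively_mono)

lemma cc_rev: "rev (cc xs) = cc (rev xs)"
  by (induct xs) (auto simp: rep_def)

lemma cc_empty: "vr xs \<Longrightarrow> cc xs = [] \<longleftrightarrow> xs = []"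
  by (cases xs) (auto simp: vr_Cons rep_def)

lemma hd_cc: "vr (x # xs) \<Longrightarrow> hd (cc (x # xs)) = fst x"
  by (auto simp: vr_Cons rep_def)

lemma tw_rep: "takeWhile (\<lambda>y. y = a) (replicate n a @ ys) = replicate n a @ takeWhile (\<lambda>y. y = a) ys"
  by (induct n) auto

lemma lead_cc: assumes "vr (x # xs)" shows "lead_run_len (cc (x # xs)) = snd x"
proof -
  have tw: "takeWhile (\<lambda>y. y = fst x) (cc xs) = []"
  proof (cases xs)
    case (Cons y ys)
    then show ?thesis using assms by (auto simp: vr_Cons rep_def)
  qed simp
  have "takeWhile (\<lambda>y. y = fst x) (rep x @ cc xs) = rep x"
    using tw tw_rep[of "fst x" "snd x" "cc xs"] by (simp add: rep_def)
  then show ?thesis using hd_cc[OF assms] by (simp add: lead_run_len_def)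
qed

lemma trail_eq: "trail_run_len w = lead_run_len (rev w)"
  by (cases "w = []") (auto simp: trail_run_len_def lead_run_len_def hd_rev)

lemma trail_cc: assumes "vr (xs @ [y])" shows "trail_run_len (cc (xs @ [y])) = snd y"
proof -
  have "vr (y # rev xs)" using assms vr_rev[of "xs @ [y]"] by simp
  then show ?thesis unfolding trail_eq cc_rev using lead_cc[of y "rev xs"] by simp
qed

definition tok :: "('b \<times> nat) list \<Rightarrow> nat \<Rightarrow> 'b list \<times> nat" where
  "tok xs d = (let n = length xs in
     if n = 2*d+1 then (rep (xs!d), 0)
     else if n = 2*d+2 then (rep (xs!d) @ rep (xs!(d+1)), 0)
     else (rep (xs!d) @ rep (xs!(n-1-d)), snd (xs!d)))"

lemma flash_cc:
  "vr xs \<Longrightarrow> length (flash (cc xs)) = (length xs + 1) div 2 \<and>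
     (\<forall>d < (length xs + 1) div 2. flash (cc xs) ! d = tok xs d)"
proof (induction "length xs" arbitrary: xs rule: less_induct)
  case less
  show ?case
  proof (cases "length xs \<le> 2")
    case True
    then consider "xs = []" | x where "xs = [x]" | x y where "xs = [x, y]"
      by (cases xs; cases "tl xs") auto
    then show ?thesis
    proof cases
      case 1 then show ?thesis by simp
    next
      case 2
      have "lead_run_len (cc xs) = snd x" using lead_cc[of x "[]"] less.prems 2 by simp
      moreover have "cc xs \<noteq> []" using cc_empty[OF less.prems] 2 by simp
      ultimately show ?thesis using 2 by (simp add: tok_def)
    next
      case 3
      have l: "lead_run_len (cc xs) = snd x" using lead_cc[of x "[y]"] less.prems 3 by simp
      have t: "trail_run_len (cc xs) = snd y" using trail_cc[of "[x]" y] less.prems 3 by simp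
      have "0 < snd y" using less.prems 3 by (simp add: vr_def)
      then have "rep y \<noteq> []" by (simp add: rep_def)
      then show ?thesis using 3 l t by (simp add: tok_def Let_def)
    qed
  next
    case False
    obtain x zs where xz: "xs = x # zs" using False by (cases xs) auto
    obtain ys y where zs: "zs = ys @ [y]" using False xz by (cases zs rule: rev_cases) auto
    have xs: "xs = x # ys @ [y]" using xz zs by simp
    have ys: "ys \<noteq> []" using False xs by auto
    have vys: "vr ys" using less.prems xs vr_append[of "x # ys" "[y]"] by (simp add: vr_Cons)
    have l: "lead_run_len (cc xs) = snd x" using lead_cc[of x "ys @ [y]"] less.prems xs by simp
    have t: "trail_run_len (cc xs) = snd y" using trail_cc[of "x # ys" y] less.prems xs by simp
    have ne: "cc ys \<noteq> []" using cc_empty[OF vys] ys by simp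
    have "0 < snd y" using less.prems xs by (simp add: vr_def)
    have fl: "flash (cc xs) = (rep x @ rep y, snd x) # flash (cc ys)"
      using l t ne `0 < snd y` xs
      apply (subst flash.simps)
      apply (simp add: Let_def)
      done
    have IH: "length (flash (cc ys)) = (length ys + 1) div 2 \<and>
     (\<forall>d < (length ys + 1) div 2. flash (cc ys) ! d = tok ys d)"
      using less.hyps[OF _ vys] xs by simp
    show ?thesis
    proof (intro conjI allI impI)
      show "length (flash (cc xs)) = (length xs + 1) div 2" using fl IH xs by simp
    next
      fix d assume d: "d < (length xs + 1) div 2"
      show "flash (cc xs) ! d = tok xs d"
      proof (cases d)
        case 0 then show ?thesis using fl xs ys by (simp add: tok_def Let_def nth_append)
      next
        case (Suc e)
        have e: "e < (length ys + 1) div 2" using d Suc xs by simp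
        have "flash (cc xs) ! d = tok ys e" using fl IH e Suc by simp
        also have "\<dots> = tok xs d" using e Suc xs
          by (auto simp: tok_def Let_def nth_append)
        finally show ?thesis .
      qed
    qed
  qed
qed

lemma rep_eq: "fst x = fst y \<Longrightarrow> rep x = rep y \<longleftrightarrow> snd x = snd y"
  by (metis length_rep rep_def)

lemma tok_diff:
  assumes vx: "vr xs" and vy: "vr ys" and f: "map fst xs = map fst ys"
    and d: "d < (length xs + 1) div 2"
  shows "tok xs d \<noteq> tok ys d \<longleftrightarrow>
    snd (xs!d) \<noteq> snd (ys!d) \<or> snd (xs!(length xs-1-d)) \<noteq> snd (ys!(length xs-1-d))"
proof -
  define n where "n = length xs"
  have len: "length ys = n" using f n_def by (metis length_map)
  have fi: "\<And>j. j < n \<Longrightarrow> fst (xs!j) = fst (ys!j)" using f len n_def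
    by (metis nth_map)
  have px: "\<And>j. j < n \<Longrightarrow> 0 < snd (xs!j)" using vx n_def by (auto simp: vr_def)
  have py: "\<And>j. j < n \<Longrightarrow> 0 < snd (ys!j)" using vy len by (auto simp: vr_def)
  have dn: "d < n" "n-1-d < n" using d n_def by auto
  show ?thesis
  proof
    assume "tok xs d \<noteq> tok ys d"
    show "snd (xs!d) \<noteq> snd (ys!d) \<or> snd (xs!(length xs-1-d)) \<noteq> snd (ys!(length xs-1-d))"
    proof (rule ccontr)
      assume "\<not> ?thesis"
      then have r1: "rep (xs!d) = rep (ys!d)" and r2: "rep (xs!(n-1-d)) = rep (ys!(n-1-d))"
        and s1: "snd (xs!d) = snd (ys!d)"
        using rep_eq[OF fi[OF dn(1)]] rep_eq[OF fi[OF dn(2)]] n_def by auto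
      have "tok xs d = tok ys d"
      proof (cases "n = 2*d+2")
        case True
        then have L: "length xs = 2*d+2" using n_def by simp
        have "n-1-d = d+1" using True by simp
        then have r3: "rep (xs!(d+1)) = rep (ys!(d+1))" using r2 by simp
        show ?thesis using r1 r3 len n_def L unfolding tok_def Let_def by simp
      qed (use r1 r2 s1 len n_def in \<open>simp add: tok_def Let_def\<close>)
      then show False using `tok xs d \<noteq> tok ys d` by simp
    qed
  next
    assume ne: "snd (xs!d) \<noteq> snd (ys!d) \<or> snd (xs!(length xs-1-d)) \<noteq> snd (ys!(length xs-1-d))"
    show "tok xs d \<noteq> tok ys d"
    proof (cases "n = 2*d+1")
      case True
      then show ?thesis using ne rep_eq[OF fi[OF dn(1)]] n_def len by (auto simp: tok_def Let_def)
    next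
      case F1: False
      show ?thesis
      proof (cases "n = 2*d+2")
        case True
        have e: "n-1-d = d+1" using True by simp
        have sx: "fst (xs!d) \<noteq> fst (xs!(d+1))"
          using successively_nth[of "\<lambda>a b. fst a \<noteq> fst b" xs d] vx True n_def
          by (simp add: vr_def)
        have vx2: "vr [xs!d, xs!(d+1)]" using sx px True by (simp add: vr_Cons vr_def)
        have vy2: "vr [ys!d, ys!(d+1)]" using sx px py fi True by (simp add: vr_Cons vr_def)
        show ?thesis
        proof
          assume eq: "tok xs d = tok ys d"
          then have ccq: "cc [xs!d, xs!(d+1)] = cc [ys!d, ys!(d+1)]"
            using True len n_def by (simp add: tok_def Let_def)
          then have a: "snd (xs!d) = snd (ys!d)"
            using lead_cc[OF vx2] lead_cc[OF vy2] by simp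
          have "length (cc [xs!d, xs!(d+1)]) = length (cc [ys!d, ys!(d+1)])" using ccq by simp
          then have "snd (xs!(d+1)) = snd (ys!(d+1))" using a by simp
          then show False using ne a e n_def by simp
        qed
      next
        case False
        show ?thesis
        proof
          assume eq: "tok xs d = tok ys d"
          then have a: "snd (xs!d) = snd (ys!d)" and
            b: "rep (xs!d) @ rep (xs!(n-1-d)) = rep (ys!d) @ rep (ys!(n-1-d))"
            using F1 False len n_def by (simp_all add: tok_def Let_def)
          from b a have "rep (xs!(n-1-d)) = rep (ys!(n-1-d))" by simp
          then have "snd (xs!(n-1-d)) = snd (ys!(n-1-d))" by (metis length_rep)
          then show False using ne a n_def by simp
        qed
      qed
    qed
  qed
qed

definition R :: "'a list \<Rightarrow> nat list \<Rightarrow> ('a esym \<times> nat) list" where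
  "R as ms = (At, 1) # zip (map Sym as) ms @ [(Dollar, 1)]"

lemma map_rle: "length as = length ms \<Longrightarrow>
  map Sym (rle_string as ms) = cc (zip (map Sym as) ms)"
proof (induction as arbitrary: ms)
  case Nil then show ?case by (simp add: rle_string_def)
next
  case (Cons a as)
  then obtain m ms' where "ms = m # ms'" by (cases ms) auto
  with Cons show ?case by (simp add: rle_string_def rep_def)
qed

lemma hat_R: "length as = length ms \<Longrightarrow> hat (rle_string as ms) = cc (R as ms)"
  by (simp add: hat_def R_def map_rle rep_def)

lemma vr_R: assumes "valid_rle as ms" shows "vr (R as ms)"
proof -
  have len: "length as = length ms" and ne: "as \<noteq> []" using assms by (auto simp: valid_rle_def)
  let ?z = "zip (map Sym as) ms"
  have zne: "?z \<noteq> []" using len ne by (cases as; cases ms) auto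
  have pos: "\<forall>x\<in>set ?z. 0 < snd x"
  proof
    fix x assume "x \<in> set ?z"
    then obtain i where "i < length ?z" "x = ?z ! i" by (metis in_set_conv_nth)
    then show "0 < snd x" using assms len by (auto simp: valid_rle_def)
  qed
  have suc: "successively (\<lambda>a b. fst a \<noteq> fst b) ?z"
    unfolding successively_conv_nth using assms len by (auto simp: valid_rle_def)
  have h: "fst (hd ?z) \<noteq> At" using zne by (cases as; cases ms) auto
  have l: "fst (last ?z) \<noteq> Dollar"
  proof -
    have "last ?z \<in> set ?z" using zne by simp
    then have "fst (last ?z) \<in> set (map Sym as)" by (metis prod.collapse set_zip_leftD)
    then show ?thesis by auto
  qed
  show ?thesis unfolding R_def vr_def
    using pos suc h l zne by (auto simp: successively_Cons successively_append_iff)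
qed

lemma length_R: "length as = length ms \<Longrightarrow> length (R as ms) = length as + 2"
  by (simp add: R_def)

lemma fst_R: "length as = length ms \<Longrightarrow> length as = length ms' \<Longrightarrow>
  map fst (R as ms) = map fst (R as ms')"
  by (simp add: R_def)

lemma snd_R: assumes "length as = length ms" "j < length as + 2"
  shows "snd (R as ms ! j) = (if j = 0 \<or> j = length as + 1 then 1 else ms ! (j - 1))"
proof (cases j)
  case 0 then show ?thesis by (simp add: R_def)
next
  case (Suc k)
  then show ?thesis using assms by (auto simp: R_def nth_append)
qed

theorem proposition6p8:
  fixes as :: "'a list" and ms ms' :: "nat list"
  assumes "valid_rle as ms" and "valid_rle as ms'"
  defines "r \<equiv> length as"
  defines "D \<equiv> {i \<in> {1..r}. ms ! (i - 1) \<noteq> ms' ! (i - 1)}"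
  shows "length (flashback (rle_string as ms)) = length (flashback (rle_string as ms')) \<and>
         {d. d < length (flashback (rle_string as ms)) \<and>
             flashback (rle_string as ms) ! d \<noteq> flashback (rle_string as ms') ! d}
           = (\<lambda>i. min i (r + 1 - i)) ` D"
proof -
  have l1: "length as = length ms" and l2: "length as = length ms'" and r1: "r \<ge> 1"
    using assms(1,2) by (auto simp: valid_rle_def r_def Suc_le_eq)
  define X where "X = R as ms"
  define Y where "Y = R as ms'"
  have fx: "flashback (rle_string as ms) = flash (cc X)" by (simp add: flashback_def hat_R[OF l1] X_def)
  have fy: "flashback (rle_string as ms') = flash (cc Y)" by (simp add: flashback_def hat_R[OF l2] Y_def)
  have vx: "vr X" using vr_R[OF assms(1)] X_def by simp
  have vy: "vr Y" using vr_R[OF assms(2)] Y_def by simp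
  have lx: "length X = r + 2" using length_R[OF l1] X_def r_def by simp
  have ly: "length Y = r + 2" using length_R[OF l2] Y_def r_def by simp
  have mf: "map fst X = map fst Y" using fst_R[OF l1 l2] X_def Y_def by simp
  note FX = flash_cc[OF vx] and FY = flash_cc[OF vy]
  have LX: "length (flash (cc X)) = (r + 3) div 2" using FX lx by simp
  have LY: "length (flash (cc Y)) = (r + 3) div 2" using FY ly by simp
  have sx: "\<And>j. j < r + 2 \<Longrightarrow> snd (X ! j) = (if j = 0 \<or> j = r + 1 then 1 else ms ! (j - 1))"
    using snd_R[OF l1] X_def r_def by simp
  have sy: "\<And>j. j < r + 2 \<Longrightarrow> snd (Y ! j) = (if j = 0 \<or> j = r + 1 then 1 else ms' ! (j - 1))"
    using snd_R[OF l2] Y_def r_def by simp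
  have key: "\<And>d. d < (r + 3) div 2 \<Longrightarrow> flash (cc X) ! d \<noteq> flash (cc Y) ! d \<longleftrightarrow>
      snd (X!d) \<noteq> snd (Y!d) \<or> snd (X!(r+1-d)) \<noteq> snd (Y!(r+1-d))"
  proof -
    fix d assume d: "d < (r + 3) div 2"
    have "flash (cc X) ! d = tok X d" "flash (cc Y) ! d = tok Y d" using FX FY d lx ly by auto
    then show "flash (cc X) ! d \<noteq> flash (cc Y) ! d \<longleftrightarrow>
      snd (X!d) \<noteq> snd (Y!d) \<or> snd (X!(r+1-d)) \<noteq> snd (Y!(r+1-d))"
      using tok_diff[OF vx vy mf] d lx by simp
  qed
  have "{d. d < (r + 3) div 2 \<and> flash (cc X) ! d \<noteq> flash (cc Y) ! d} = (\<lambda>i. min i (r + 1 - i)) ` D"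
  proof (intro equalityI subsetI)
    fix d assume "d \<in> {d. d < (r + 3) div 2 \<and> flash (cc X) ! d \<noteq> flash (cc Y) ! d}"
    then have d: "d < (r + 3) div 2" and ne: "snd (X!d) \<noteq> snd (Y!d) \<or> snd (X!(r+1-d)) \<noteq> snd (Y!(r+1-d))"
      using key by auto
    have b1: "d < r + 2" "r + 1 - d < r + 2" "2 * d \<le> r + 1" using d by auto
    have d0: "d \<noteq> 0"
    proof
      assume "d = 0"
      then show False using ne sx[of 0] sy[of 0] sx[of "r+1"] sy[of "r+1"] by simp
    qed
    show "d \<in> (\<lambda>i. min i (r + 1 - i)) ` D"
    proof (cases "snd (X!d) \<noteq> snd (Y!d)")
      case True
      then have "d \<in> D" using sx[OF b1(1)] sy[OF b1(1)] d0 b1 by (auto simp: D_def split: if_splits)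
      moreover have "d = min d (r + 1 - d)" using b1 by simp
      ultimately show ?thesis by blast
    next
      case False
      then have ne2: "snd (X!(r+1-d)) \<noteq> snd (Y!(r+1-d))" using ne by simp
      have "r + 1 - d \<in> D" using sx[OF b1(2)] sy[OF b1(2)] ne2 d0 b1
        by (auto simp: D_def split: if_splits)
      moreover have "d = min (r + 1 - d) (r + 1 - (r + 1 - d))" using b1 by simp
      ultimately show ?thesis by blast
    qed
  next
    fix d assume "d \<in> (\<lambda>i. min i (r + 1 - i)) ` D"
    then obtain i where i: "i \<in> D" and di: "d = min i (r + 1 - i)" by blast
    have i1: "1 \<le> i" "i \<le> r" and mi: "ms ! (i - 1) \<noteq> ms' ! (i - 1)" using i by (auto simp: D_def)
    have d: "d < (r + 3) div 2" using di i1 by simp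
    have "snd (X!i) \<noteq> snd (Y!i)" using sx[of i] sy[of i] i1 mi by auto
    moreover have "d = i \<or> r + 1 - d = i" using di i1 by auto
    ultimately have "snd (X!d) \<noteq> snd (Y!d) \<or> snd (X!(r+1-d)) \<noteq> snd (Y!(r+1-d))" by auto
    then show "d \<in> {d. d < (r + 3) div 2 \<and> flash (cc X) ! d \<noteq> flash (cc Y) ! d}"
      using key[OF d] d by simp
  qed
  then show ?thesis using fx fy LX LY by simp
qed

end
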